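(* For every $p\in[1,\infty)$, the profile of the lamplighter group satisfies $\epsilon_{\mathbb Z\wr\mathbb Z;p}(S)\preceq \dfrac{\log S}{S^{1/3}}$.
   Context: The lamplighter group $\mathbb Z\wr\mathbb Z$ consists of pairs $(f,n)$ with $f\colon\mathbb Z\to\mathbb Z$ finitely supported and $n\in\mathbb Z$, with product $(f,n)(g,n')=(f+g(\cdot-n),n+n')$, equipped with the word metric for generators $(\delta_0,0)$ and $(0,1)$. For a metric space $X$, $\ell^p(X)$ and $\ell^p_1(X)$ are the $p$-summable functions and their unit sphere; for $\xi\colon X\to\ell^p(X)$, $S(\xi)=\sup\{d(x,y):\xi_x(y)\ne0\}$, $\varepsilon(\xi;p)=\sup_{x\ne y}\|\xi_x-\xi_y\|_p/d(x,y)$, and $\epsilon_{X;p}(S)=\inf\{\varepsilon(\xi;p):\xi\colon X\to\ell^p_1(X),\ S(\xi)\le S\}$. For non-negative monotone functions, $g\preceq f$ means there are constants $C,D>0$ with $f(t)\ge Cg(Dt)$ for all sufficiently large $t$. *)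

theory Defs
  imports "HOL-Analysis.Analysis"
begin

type_synonym LL = "(int \<Rightarrow> int) \<times> int"

definition LL_carrier :: "LL set" where
  "LL_carrier = {(f, n). finite {x. f x \<noteq> 0}}"

definition LL_mult :: "LL \<Rightarrow> LL \<Rightarrow> LL" where
  "LL_mult a b = (case a of (f, n) \<Rightarrow> (case b of (g, m) \<Rightarrow> (\<lambda>x. f x + g (x - n), n + m)))"

definition delta0 :: "int \<Rightarrow> int" where
  "delta0 = (\<lambda>x. if x = 0 then 1 else 0)"

definition LL_gens :: "LL set" where
  "LL_gens = {(delta0, 0), (\<lambda>x. - delta0 x, 0), (\<lambda>_. 0, 1), (\<lambda>_. 0, -1)}"

text \<open>Word metric: d(x,y) = word length of x^{-1} y, i.e. least number of generators
  needed to reach y from x by right multiplication.\<close>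
definition LL_dist :: "LL \<Rightarrow> LL \<Rightarrow> nat" where
  "LL_dist x y = (LEAST k. \<exists>ws. length ws = k \<and> set ws \<subseteq> LL_gens \<and> foldl LL_mult x ws = y)"

definition lp_norm :: "real \<Rightarrow> 'a set \<Rightarrow> ('a \<Rightarrow> real) \<Rightarrow> real" where
  "lp_norm p X h = (\<Sum>\<^sub>\<infinity>y\<in>X. \<bar>h y\<bar> powr p) powr (1 / p)"

definition lp_space :: "real \<Rightarrow> 'a set \<Rightarrow> ('a \<Rightarrow> real) set" where
  "lp_space p X = {h. (\<lambda>y. \<bar>h y\<bar> powr p) summable_on X}"

definition lp_sphere :: "real \<Rightarrow> 'a set \<Rightarrow> ('a \<Rightarrow> real) set" where
  "lp_sphere p X = {h \<in> lp_space p X. lp_norm p X h = 1}"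

definition eps_xi :: "real \<Rightarrow> 'a set \<Rightarrow> ('a \<Rightarrow> 'a \<Rightarrow> real) \<Rightarrow> ('a \<Rightarrow> 'a \<Rightarrow> real) \<Rightarrow> real" where
  "eps_xi p X d \<xi> = (SUP (x, y) \<in> {(x, y). x \<in> X \<and> y \<in> X \<and> x \<noteq> y}.
       lp_norm p X (\<lambda>z. \<xi> x z - \<xi> y z) / d x y)"

text \<open>S(xi) = sup{d(x,y) : xi_x(y) /= 0}; S(xi) <= S is stated pointwise.\<close>
definition supp_radius_le :: "'a set \<Rightarrow> ('a \<Rightarrow> 'a \<Rightarrow> real) \<Rightarrow> ('a \<Rightarrow> 'a \<Rightarrow> real) \<Rightarrow> real \<Rightarrow> bool" where
  "supp_radius_le X d \<xi> S \<longleftrightarrow> (\<forall>x\<in>X. \<forall>y\<in>X. \<xi> x y \<noteq> 0 \<longrightarrow> d x y \<le> S)"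

definition profile :: "real \<Rightarrow> 'a set \<Rightarrow> ('a \<Rightarrow> 'a \<Rightarrow> real) \<Rightarrow> real \<Rightarrow> real" where
  "profile p X d S = Inf {eps_xi p X d \<xi> | \<xi>.
       (\<forall>x\<in>X. \<xi> x \<in> lp_sphere p X) \<and> supp_radius_le X d \<xi> S}"

definition preceq :: "(real \<Rightarrow> real) \<Rightarrow> (real \<Rightarrow> real) \<Rightarrow> bool" where
  "preceq g f \<longleftrightarrow> (\<exists>C>0. \<exists>D>0. eventually (\<lambda>t. f t \<ge> C * g (D * t)) at_top)"

end

theory Submission
  imports Defs
begin


definition LL_e :: LL where "LL_e = (\<lambda>_. 0, 0)"
definition LL_inv :: "LL \<Rightarrow> LL" where "LL_inv x = (\<lambda>k. - fst x (k + snd x), - snd x)"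

lemma LL_mult_simp: "LL_mult (f, n) (g, m) = (\<lambda>x. f x + g (x - n), n + m)"
  by (simp add: LL_mult_def)

lemma LL_assoc: "LL_mult (LL_mult x y) z = LL_mult x (LL_mult y z)"
  by (cases x; cases y; cases z) (simp add: LL_mult_def fun_eq_iff algebra_simps)

lemma LL_inv_left: "LL_mult (LL_inv x) (LL_mult x z) = z"
  by (cases x; cases z) (simp add: LL_mult_def LL_inv_def fun_eq_iff algebra_simps)

lemma LL_inv_right: "LL_mult x (LL_mult (LL_inv x) z) = z"
  by (cases x; cases z) (simp add: LL_mult_def LL_inv_def fun_eq_iff algebra_simps)

lemma LL_e_left[simp]: "LL_mult LL_e z = z"
  by (cases z) (simp add: LL_mult_def LL_e_def)

lemma LL_e_right[simp]: "LL_mult z LL_e = z"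
  by (cases z) (simp add: LL_mult_def LL_e_def)

lemma LL_inv_mult: "LL_inv (LL_mult w s) = LL_mult (LL_inv s) (LL_inv w)"
  by (cases w; cases s) (simp add: LL_mult_def LL_inv_def fun_eq_iff algebra_simps)

lemma LL_inv_inv[simp]: "LL_inv (LL_inv x) = x"
  by (cases x) (simp add: LL_inv_def fun_eq_iff)

lemma mult_carrier:
  assumes "x \<in> LL_carrier" "y \<in> LL_carrier" shows "LL_mult x y \<in> LL_carrier"
proof -
  obtain f n where x: "x = (f, n)" by (cases x)
  obtain g m where y: "y = (g, m)" by (cases y)
  have ff: "finite {k. f k \<noteq> 0}" using assms x by (simp add: LL_carrier_def)
  have fg: "finite {k. g k \<noteq> 0}" using assms y by (simp add: LL_carrier_def)
  have "{k. f k + g (k - n) \<noteq> 0} \<subseteq> {k. f k \<noteq> 0} \<union> (\<lambda>k. k + n) ` {k. g k \<noteq> 0}"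
  proof
    fix k assume "k \<in> {k. f k + g (k - n) \<noteq> 0}"
    then have "f k \<noteq> 0 \<or> g (k - n) \<noteq> 0" by auto
    then show "k \<in> {k. f k \<noteq> 0} \<union> (\<lambda>k. k + n) ` {k. g k \<noteq> 0}"
      by (auto intro!: image_eqI[where x="k - n"])
  qed
  then have "finite {k. f k + g (k - n) \<noteq> 0}"
    by (rule finite_subset) (use ff fg in auto)
  then show ?thesis by (simp add: x y LL_mult_def LL_carrier_def)
qed

lemma inv_carrier:
  assumes "x \<in> LL_carrier" shows "LL_inv x \<in> LL_carrier"
proof -
  obtain f n where x: "x = (f, n)" by (cases x)
  have ff: "finite {k. f k \<noteq> 0}" using assms x by (simp add: LL_carrier_def)
  have "{k. - f (k + n) \<noteq> 0} = (\<lambda>k. k - n) ` {k. f k \<noteq> 0}"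
    by (auto intro!: image_eqI[where x="_ + n"])
  then show ?thesis using ff by (simp add: x LL_inv_def LL_carrier_def)
qed

lemma e_carrier[simp]: "LL_e \<in> LL_carrier"
  by (simp add: LL_e_def LL_carrier_def)

lemma gens_carrier: "s \<in> LL_gens \<Longrightarrow> s \<in> LL_carrier"
  by (auto simp: LL_gens_def LL_carrier_def delta0_def)

lemma gens_inv: "s \<in> LL_gens \<Longrightarrow> LL_inv s \<in> LL_gens"
  by (auto simp: LL_gens_def LL_inv_def delta0_def fun_eq_iff)

lemma bij_left: "a \<in> LL_carrier \<Longrightarrow> bij_betw (LL_mult a) LL_carrier LL_carrier"
  apply (rule bij_betw_byWitness[where f'="LL_mult (LL_inv a)"])
  by (auto simp: LL_inv_left LL_inv_right mult_carrier inv_carrier)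

lemma foldl_mult: "foldl LL_mult (LL_mult x w) ws = LL_mult x (foldl LL_mult w ws)"
  by (induction ws arbitrary: w) (auto simp: LL_assoc)

lemma foldl_carrier: "x \<in> LL_carrier \<Longrightarrow> set ws \<subseteq> LL_gens \<Longrightarrow> foldl LL_mult x ws \<in> LL_carrier"
  by (induction ws arbitrary: x) (auto simp: mult_carrier gens_carrier)

definition Rch :: "LL \<Rightarrow> nat \<Rightarrow> bool" where
  "Rch z k \<longleftrightarrow> (\<exists>ws. set ws \<subseteq> LL_gens \<and> length ws \<le> k \<and> foldl LL_mult LL_e ws = z)"

lemma Rch_e: "Rch LL_e 0" unfolding Rch_def by (auto intro!: exI[of _ "[]"])

lemma Rch_mono: "Rch z k \<Longrightarrow> k \<le> k' \<Longrightarrow> Rch z k'"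
  unfolding Rch_def by force

lemma Rch_step: "Rch z k \<Longrightarrow> s \<in> LL_gens \<Longrightarrow> Rch (LL_mult z s) (Suc k)"
proof -
  assume "Rch z k" "s \<in> LL_gens"
  then obtain ws where "set ws \<subseteq> LL_gens" "length ws \<le> k" "foldl LL_mult LL_e ws = z"
    unfolding Rch_def by blast
  then show ?thesis unfolding Rch_def using \<open>s \<in> LL_gens\<close>
    by (intro exI[of _ "ws @ [s]"]) auto
qed

lemma Rch_toggle_nat:
  "Rch (f, n) k \<Longrightarrow> Rch (\<lambda>x. f x + int m * delta0 (x - n), n) (k + m)
     \<and> Rch (\<lambda>x. f x - int m * delta0 (x - n), n) (k + m)"
proof (induction m)
  case 0 then show ?case by simp
next
  case (Suc m)
  then have A: "Rch (\<lambda>x. f x + int m * delta0 (x - n), n) (k + m)"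
    and B: "Rch (\<lambda>x. f x - int m * delta0 (x - n), n) (k + m)" by auto
  have g1: "(delta0, 0) \<in> LL_gens" and g2: "(\<lambda>x. - delta0 x, 0) \<in> LL_gens" by (auto simp: LL_gens_def)
  from Rch_step[OF A g1] have "Rch (\<lambda>x. f x + int (Suc m) * delta0 (x - n), n) (k + Suc m)"
    by (simp add: LL_mult_def algebra_simps)
  moreover from Rch_step[OF B g2] have "Rch (\<lambda>x. f x - int (Suc m) * delta0 (x - n), n) (k + Suc m)"
    by (simp add: LL_mult_def algebra_simps)
  ultimately show ?case by simp
qed

lemma Rch_toggle:
  assumes "Rch (f, n) k" shows "Rch (\<lambda>x. f x + c * delta0 (x - n), n) (k + nat \<bar>c\<bar>)"
proof (cases "c \<ge> 0")
  case True
  then have "c = int (nat \<bar>c\<bar>)" by simp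
  then show ?thesis using Rch_toggle_nat[OF assms, of "nat \<bar>c\<bar>"] by (metis (no_types))
next
  case False
  then have "c = - int (nat \<bar>c\<bar>)" by simp
  then have e: "(\<lambda>x. f x + c * delta0 (x - n)) = (\<lambda>x. f x - int (nat \<bar>c\<bar>) * delta0 (x - n))"
    by (metis (no_types, opaque_lifting) minus_mult_left diff_conv_add_uminus)
  show ?thesis unfolding e using Rch_toggle_nat[OF assms, of "nat \<bar>c\<bar>"] by blast
qed

lemma Rch_move_nat:
  "Rch (f, n) k \<Longrightarrow> Rch (f, n + int m) (k + m) \<and> Rch (f, n - int m) (k + m)"
proof (induction m)
  case 0 then show ?case by simp
next
  case (Suc m)
  then have A: "Rch (f, n + int m) (k + m)" and B: "Rch (f, n - int m) (k + m)" by auto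
  have g1: "(\<lambda>_. 0, 1) \<in> LL_gens" and g2: "(\<lambda>_. 0, -1) \<in> LL_gens" by (auto simp: LL_gens_def)
  from Rch_step[OF A g1] have "Rch (f, n + int (Suc m)) (k + Suc m)"
    by (simp add: LL_mult_def algebra_simps)
  moreover from Rch_step[OF B g2] have "Rch (f, n - int (Suc m)) (k + Suc m)"
    by (simp add: LL_mult_def algebra_simps)
  ultimately show ?case by simp
qed

lemma Rch_move:
  assumes "Rch (f, n) k" shows "Rch (f, n') (k + nat \<bar>n' - n\<bar>)"
proof (cases "n' \<ge> n")
  case True
  then have "n' = n + int (nat \<bar>n' - n\<bar>)" by simp
  then show ?thesis using Rch_move_nat[OF assms, of "nat \<bar>n' - n\<bar>"] by (metis (no_types))
next
  case False
  then have "n' = n - int (nat \<bar>n' - n\<bar>)" by simp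
  then show ?thesis using Rch_move_nat[OF assms, of "nat \<bar>n' - n\<bar>"] by (metis (no_types))
qed

lemma Rch_sweep:
  fixes K M :: nat
  assumes "\<And>k. \<bar>f k\<bar> \<le> int M"
  shows "Rch (\<lambda>k. if - int K \<le> k \<and> k \<le> - int K - 1 + int i then f k else 0, - int K - 1 + int i)
            (K + 1 + i * (M + 1))"
proof (induction i)
  case 0
  have "Rch (\<lambda>_. 0, 0) 0" using Rch_e by (simp add: LL_e_def)
  from Rch_move[OF this, of "- int K - 1"] have "Rch (\<lambda>_. 0, - int K - 1) (K + 1)"
    by (simp add: nat_add_distrib)
  moreover have "(\<lambda>k. if - int K \<le> k \<and> k \<le> - int K - 1 + int 0 then f k else 0) = (\<lambda>_. 0)"
    by (auto simp: fun_eq_iff)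
  ultimately show ?case by simp
next
  case (Suc i)
  let ?j = "- int K - 1 + int i"
  from Rch_move[OF Suc.IH, of "?j + 1"]
  have "Rch (\<lambda>k. if - int K \<le> k \<and> k \<le> ?j then f k else 0, ?j + 1) (K + 1 + i * (M + 1) + 1)"
    by simp
  from Rch_toggle[OF this, of "f (?j + 1)"]
  have R: "Rch (\<lambda>x. (if - int K \<le> x \<and> x \<le> ?j then f x else 0) + f (?j + 1) * delta0 (x - (?j + 1)), ?j + 1)
     (K + 1 + i * (M + 1) + 1 + nat \<bar>f (?j + 1)\<bar>)" .
  have eq: "(\<lambda>x. (if - int K \<le> x \<and> x \<le> ?j then f x else 0) + f (?j + 1) * delta0 (x - (?j + 1)))
     = (\<lambda>k. if - int K \<le> k \<and> k \<le> - int K - 1 + int (Suc i) then f k else 0)"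
    by (auto simp: fun_eq_iff delta0_def)
  have le: "K + 1 + i * (M + 1) + 1 + nat \<bar>f (?j + 1)\<bar> \<le> K + 1 + Suc i * (M + 1)"
    using assms[of "?j + 1"] by simp
  show ?case using Rch_mono[OF R le] unfolding eq by (simp add: add.assoc)
qed

lemma Rch_bound:
  fixes K M :: nat
  assumes "\<And>k. \<bar>f k\<bar> \<le> int M" "\<And>k. \<bar>k\<bar> > int K \<Longrightarrow> f k = 0" "\<bar>n\<bar> \<le> int K"
  shows "Rch (f, n) (3 * K + 1 + (2 * K + 1) * (M + 1))"
proof -
  from Rch_sweep[OF assms(1), of K "2 * K + 1"]
  have R: "Rch (\<lambda>k. if - int K \<le> k \<and> k \<le> int K then f k else 0, int K) (K + 1 + (2 * K + 1) * (M + 1))"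
    by simp
  have eq: "(\<lambda>k. if - int K \<le> k \<and> k \<le> int K then f k else 0) = f"
    using assms(2) by (auto simp: fun_eq_iff)
  from Rch_move[OF R[unfolded eq], of n]
  have "Rch (f, n) (K + 1 + (2 * K + 1) * (M + 1) + nat \<bar>n - int K\<bar>)" .
  moreover have "K + 1 + (2 * K + 1) * (M + 1) + nat \<bar>n - int K\<bar> \<le> 3 * K + 1 + (2 * K + 1) * (M + 1)"
    using assms(3) by simp
  ultimately show ?thesis by (rule Rch_mono)
qed

lemma carrier_bounded:
  assumes "(f, n) \<in> LL_carrier"
  shows "\<exists>K M. (\<forall>k. \<bar>f k\<bar> \<le> int M) \<and> (\<forall>k. \<bar>k\<bar> > int K \<longrightarrow> f k = 0) \<and> \<bar>n\<bar> \<le> int K"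
proof -
  let ?A = "{k. f k \<noteq> 0}"
  have fin: "finite ?A" using assms by (simp add: LL_carrier_def)
  define K where "K = nat (max \<bar>n\<bar> (Max (insert 0 (abs ` ?A))))"
  define M where "M = nat (Max (insert 0 (abs ` f ` ?A)))"
  have 1: "\<forall>k. \<bar>f k\<bar> \<le> int M"
  proof
    fix k show "\<bar>f k\<bar> \<le> int M"
    proof (cases "f k = 0")
      case False
      then have "\<bar>f k\<bar> \<le> Max (insert 0 (abs ` f ` ?A))" using fin by (intro Max_ge) auto
      then show ?thesis unfolding M_def by linarith
    qed simp
  qed
  have 2: "\<forall>k. \<bar>k\<bar> > int K \<longrightarrow> f k = 0"
  proof (intro allI impI, rule ccontr)
    fix k assume "\<bar>k\<bar> > int K" "f k \<noteq> 0"
    then have "\<bar>k\<bar> \<le> Max (insert 0 (abs ` ?A))" using fin by (intro Max_ge) auto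
    then show False using \<open>\<bar>k\<bar> > int K\<close> unfolding K_def by linarith
  qed
  have 3: "\<bar>n\<bar> \<le> int K" unfolding K_def by linarith
  show ?thesis using 1 2 3 by blast
qed

lemma carrier_Rch: "z \<in> LL_carrier \<Longrightarrow> \<exists>k. Rch z k"
  by (cases z) (metis carrier_bounded Rch_bound)

lemma dist_witness:
  assumes "x \<in> LL_carrier" "y \<in> LL_carrier"
  shows "\<exists>ws. length ws = LL_dist x y \<and> set ws \<subseteq> LL_gens \<and> foldl LL_mult x ws = y"
proof -
  have "LL_mult (LL_inv x) y \<in> LL_carrier" using assms by (simp add: mult_carrier inv_carrier)
  then obtain k where "Rch (LL_mult (LL_inv x) y) k" using carrier_Rch by blast
  then obtain ws where ws: "set ws \<subseteq> LL_gens" "foldl LL_mult LL_e ws = LL_mult (LL_inv x) y"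
    unfolding Rch_def by blast
  have "foldl LL_mult x ws = y"
    using foldl_mult[of x LL_e ws] ws by (simp add: LL_inv_right)
  then have "\<exists>k ws. length ws = k \<and> set ws \<subseteq> LL_gens \<and> foldl LL_mult x ws = y" using ws by blast
  from LeastI_ex[OF this] show ?thesis unfolding LL_dist_def .
qed

lemma dist_le_Rch:
  assumes "Rch (LL_mult (LL_inv x) y) k"
  shows "LL_dist x y \<le> k"
proof -
  from assms obtain ws where ws: "set ws \<subseteq> LL_gens" "length ws \<le> k" "foldl LL_mult LL_e ws = LL_mult (LL_inv x) y"
    unfolding Rch_def by blast
  have "foldl LL_mult x ws = y"
    using foldl_mult[of x LL_e ws] ws by (simp add: LL_inv_right)
  then have "LL_dist x y \<le> length ws" unfolding LL_dist_def
    by (intro Least_le) (use ws in blast)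
  then show ?thesis using ws by simp
qed



definition tent :: "nat \<Rightarrow> int \<Rightarrow> real" where
  "tent a v = real_of_int (max 0 (2 * int a - \<bar>v\<bar>))"

definition Win :: "nat \<Rightarrow> int \<Rightarrow> int set" where
  "Win a n = {n - 2 * int a .. n + 2 * int a}"

definition Lam :: "nat \<Rightarrow> (int \<Rightarrow> int) \<Rightarrow> int \<Rightarrow> real" where
  "Lam a f n = (if (\<forall>k. k \<notin> Win a n \<longrightarrow> f k = 0) then (\<Prod>k\<in>Win a n. tent a (f k)) else 0)"

definition phi :: "nat \<Rightarrow> LL \<Rightarrow> real" where
  "phi a z = tent a (snd z) * Lam a (fst z) (snd z)"

lemma tent_nonneg[simp]: "0 \<le> tent a v" by (simp add: tent_def)

lemma Lam_nonneg[simp]: "0 \<le> Lam a f n" by (simp add: Lam_def prod_nonneg)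

lemma phi_nonneg[simp]: "0 \<le> phi a z" by (simp add: phi_def)

lemma tent_diff_le1: "\<bar>c\<bar> \<le> 1 \<Longrightarrow> \<bar>tent a v - tent a (v + c)\<bar> \<le> 1"
  by (simp add: tent_def)

lemma tent_1d:
  fixes p :: real
  assumes a: "a \<ge> 1" and p: "p \<ge> 1" and c: "\<bar>c\<bar> \<le> 1"
  shows "\<bar>tent a v - tent a (v + c)\<bar> powr p
     \<le> (\<Sum>j\<in>{- 2 * int a .. 2 * int a}. tent a (v + j) powr p) / real a powr (p + 1)"
proof (cases "\<bar>v\<bar> > 2 * int a")
  case True
  then have "tent a v = 0" "tent a (v + c) = 0" using c by (auto simp: tent_def)
  then show ?thesis by (simp add: sum_nonneg)
next
  case False
  define Jv where "Jv = (if v \<ge> 0 then {- v .. - v + int a} else {- v - int a .. - v})"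
  have sub: "Jv \<subseteq> {- 2 * int a .. 2 * int a}" using False by (auto simp: Jv_def)
  have cardJ: "card Jv = a + 1" by (simp add: Jv_def)
  have big: "tent a (v + j) \<ge> real a" if "j \<in> Jv" for j
    using that by (auto simp: Jv_def tent_def split: if_splits)
  have "real (a + 1) * real a powr p = (\<Sum>j\<in>Jv. real a powr p)" using cardJ by simp
  also have "\<dots> \<le> (\<Sum>j\<in>Jv. tent a (v + j) powr p)"
    using big p by (intro sum_mono powr_mono2) auto
  also have "\<dots> \<le> (\<Sum>j\<in>{- 2 * int a .. 2 * int a}. tent a (v + j) powr p)"
    using sub by (intro sum_mono2) auto
  finally have S: "real (a + 1) * real a powr p \<le> (\<Sum>j\<in>{- 2 * int a .. 2 * int a}. tent a (v + j) powr p)" .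
  have apos: "real a > 0" using a by simp
  have "real a powr (p + 1) = real a * real a powr p" using apos by (simp add: powr_add)
  also have "\<dots> \<le> real (a + 1) * real a powr p" by (intro mult_right_mono) auto
  finally have "1 \<le> (\<Sum>j\<in>{- 2 * int a .. 2 * int a}. tent a (v + j) powr p) / real a powr (p + 1)"
    using S apos by (simp add: field_simps)
  moreover have "\<bar>tent a v - tent a (v + c)\<bar> powr p \<le> 1"
    using tent_diff_le1[OF c] p by (intro powr_le1) auto
  ultimately show ?thesis by linarith
qed

lemma scaled_1d:
  fixes p A :: real
  assumes a: "a \<ge> 1" and p: "p \<ge> 1" and c: "\<bar>c\<bar> \<le> 1" and A: "A \<ge> 0"
  shows "\<bar>A * tent a v - A * tent a (v + c)\<bar> powr p
     \<le> (\<Sum>j\<in>{- 2 * int a .. 2 * int a}. (A * tent a (v + j)) powr p) / real a powr (p + 1)"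
proof -
  have "\<bar>A * tent a v - A * tent a (v + c)\<bar> powr p = A powr p * \<bar>tent a v - tent a (v + c)\<bar> powr p"
    using A by (simp add: powr_mult abs_mult flip: right_diff_distrib)
  also have "\<dots> \<le> A powr p * ((\<Sum>j\<in>{- 2 * int a .. 2 * int a}. tent a (v + j) powr p) / real a powr (p + 1))"
    by (intro mult_left_mono tent_1d assms) auto
  also have "\<dots> = (\<Sum>j\<in>{- 2 * int a .. 2 * int a}. (A * tent a (v + j)) powr p) / real a powr (p + 1)"
    by (simp add: powr_mult sum_distrib_left)
  finally show ?thesis .
qed

definition tgl :: "int \<Rightarrow> LL" where "tgl j = (\<lambda>k. j * delta0 k, 0)"
definition shf :: "int \<Rightarrow> LL" where "shf j = (\<lambda>_. 0, j)"

lemma tgl_carrier: "tgl j \<in> LL_carrier"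
proof -
  have "{k. j * delta0 k \<noteq> 0} \<subseteq> {0}" by (auto simp: delta0_def)
  then show ?thesis by (auto simp: tgl_def LL_carrier_def intro: finite_subset)
qed

lemma shf_carrier: "shf j \<in> LL_carrier"
  by (simp add: shf_def LL_carrier_def)

lemma tgl_mult: "LL_mult (tgl j) (f, n) = (\<lambda>k. f k + j * delta0 k, n)"
  by (simp add: tgl_def LL_mult_def fun_eq_iff)

lemma shf_mult: "LL_mult (shf j) (f, n) = (\<lambda>k. f (k - j), n + j)"
  by (simp add: shf_def LL_mult_def fun_eq_iff)

lemma phi_tgl:
  assumes "tent a n \<noteq> 0"
  shows "\<exists>A\<ge>0. \<forall>j. phi a (LL_mult (tgl j) (f, n)) = A * tent a (f 0 + j)"
proof -
  have "\<bar>n\<bar> < 2 * int a" using assms by (auto simp: tent_def)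
  then have W0: "0 \<in> Win a n" by (auto simp: Win_def)
  define Q where "Q = (if (\<forall>k. k \<notin> Win a n \<longrightarrow> f k = 0) then (\<Prod>k\<in>Win a n - {0}. tent a (f k)) else 0)"
  have Qnn: "Q \<ge> 0" by (simp add: Q_def prod_nonneg)
  have L: "Lam a (\<lambda>k. f k + j * delta0 k) n = tent a (f 0 + j) * Q" for j
  proof -
    have cond: "(\<forall>k. k \<notin> Win a n \<longrightarrow> f k + j * delta0 k = 0) \<longleftrightarrow> (\<forall>k. k \<notin> Win a n \<longrightarrow> f k = 0)"
    proof -
      have "k \<notin> Win a n \<Longrightarrow> delta0 k = 0" for k using W0 by (auto simp: delta0_def)
      then show ?thesis by auto
    qed
    have "(\<Prod>k\<in>Win a n. tent a (f k + j * delta0 k)) = tent a (f 0 + j) * (\<Prod>k\<in>Win a n - {0}. tent a (f k + j * delta0 k))"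
      using W0 by (subst prod.remove[of "Win a n" 0]) (simp_all add: Win_def delta0_def)
    also have "(\<Prod>k\<in>Win a n - {0}. tent a (f k + j * delta0 k)) = (\<Prod>k\<in>Win a n - {0}. tent a (f k))"
      by (intro prod.cong) (auto simp: delta0_def)
    finally show ?thesis unfolding Lam_def Q_def cond by auto
  qed
  show ?thesis
    by (intro exI[of _ "tent a n * Q"]) (auto simp: tgl_mult phi_def L Qnn)
qed

lemma Lam_shift: "Lam a (\<lambda>k. f (k - j)) (n + j) = Lam a f n"
proof -
  have cond: "(\<forall>k. k \<notin> Win a (n + j) \<longrightarrow> f (k - j) = 0) \<longleftrightarrow> (\<forall>k. k \<notin> Win a n \<longrightarrow> f k = 0)"
  proof -
    have mem: "k \<in> Win a (n + j) \<longleftrightarrow> k - j \<in> Win a n" for k by (auto simp: Win_def)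
    show ?thesis
    proof
      assume H: "\<forall>k. k \<notin> Win a (n + j) \<longrightarrow> f (k - j) = 0"
      show "\<forall>k. k \<notin> Win a n \<longrightarrow> f k = 0"
      proof (intro allI impI)
        fix k assume "k \<notin> Win a n"
        then have "k + j \<notin> Win a (n + j)" using mem[of "k + j"] by simp
        then show "f k = 0" using H by force
      qed
    next
      assume H: "\<forall>k. k \<notin> Win a n \<longrightarrow> f k = 0"
      show "\<forall>k. k \<notin> Win a (n + j) \<longrightarrow> f (k - j) = 0"
        using H mem by blast
    qed
  qed
  have W: "Win a (n + j) = (\<lambda>k. k + j) ` Win a n" by (simp add: Win_def algebra_simps)
  have "(\<Prod>k\<in>Win a (n + j). tent a (f (k - j))) = (\<Prod>k\<in>Win a n. tent a (f k))"
    unfolding W by (subst prod.reindex) (auto simp: inj_on_def)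
  then show ?thesis unfolding Lam_def cond by auto
qed

lemma phi_shf: "phi a (LL_mult (shf j) (f, n)) = Lam a f n * tent a (n + j)"
  by (simp add: shf_mult phi_def Lam_shift)

lemma pointwise_tgl:
  fixes p :: real
  assumes a: "a \<ge> 1" and p: "p \<ge> 1" and c: "\<bar>c\<bar> \<le> 1"
  shows "\<bar>phi a z - phi a (LL_mult (tgl c) z)\<bar> powr p
     \<le> (\<Sum>j\<in>{- 2 * int a .. 2 * int a}. phi a (LL_mult (tgl j) z) powr p) / real a powr (p + 1)"
proof -
  obtain f n where z: "z = (f, n)" by (cases z)
  show ?thesis
  proof (cases "tent a n = 0")
    case True
    then have "phi a (LL_mult (tgl j) z) = 0" for j by (simp add: z tgl_mult phi_def)
    moreover have "phi a z = 0" using True by (simp add: z phi_def)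
    ultimately show ?thesis by simp
  next
    case False
    then obtain A where A: "A \<ge> 0" "\<And>j. phi a (LL_mult (tgl j) (f, n)) = A * tent a (f 0 + j)"
      using phi_tgl by blast
    have z0: "phi a z = A * tent a (f 0)" using A(2)[of 0] by (simp add: z tgl_mult delta0_def)
    show ?thesis unfolding z0 unfolding z A(2) by (rule scaled_1d[OF a p c A(1)])
  qed
qed

lemma pointwise_shf:
  fixes p :: real
  assumes a: "a \<ge> 1" and p: "p \<ge> 1" and c: "\<bar>c\<bar> \<le> 1"
  shows "\<bar>phi a z - phi a (LL_mult (shf c) z)\<bar> powr p
     \<le> (\<Sum>j\<in>{- 2 * int a .. 2 * int a}. phi a (LL_mult (shf j) z) powr p) / real a powr (p + 1)"
proof -
  obtain f n where z: "z = (f, n)" by (cases z)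
  have z0: "phi a z = Lam a f n * tent a n" by (simp add: z phi_def)
  show ?thesis unfolding z0 unfolding z phi_shf
    by (rule scaled_1d[OF a p c]) simp
qed

definition fsupp :: "(LL \<Rightarrow> real) \<Rightarrow> bool" where "fsupp g \<longleftrightarrow> finite {z. g z \<noteq> 0}"

lemma fsupp_summable: "fsupp g \<Longrightarrow> g summable_on A"
proof -
  assume "fsupp g"
  then have fin: "finite (A \<inter> {z. g z \<noteq> 0})" by (simp add: fsupp_def)
  have "g summable_on A \<longleftrightarrow> g summable_on (A \<inter> {z. g z \<noteq> 0})"
    by (rule summable_on_cong_neutral) auto
  then show ?thesis using fin by simp
qed

lemma fsupp_transl: "fsupp g \<Longrightarrow> fsupp (\<lambda>z. g (LL_mult h z))"
proof -
  assume "fsupp g"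
  moreover have "{z. g (LL_mult h z) \<noteq> 0} \<subseteq> LL_mult (LL_inv h) ` {w. g w \<noteq> 0}"
    by (auto simp: LL_inv_left intro!: image_eqI[where x="LL_mult h _"])
  ultimately show ?thesis unfolding fsupp_def by (meson finite_subset finite_imageI)
qed

lemma fsupp_dom: "fsupp g1 \<Longrightarrow> fsupp g2 \<Longrightarrow> (\<And>z. H z \<noteq> 0 \<Longrightarrow> g1 z \<noteq> 0 \<or> g2 z \<noteq> 0) \<Longrightarrow> fsupp H"
  unfolding fsupp_def by (rule finite_subset[of _ "{z. g1 z \<noteq> 0} \<union> {z. g2 z \<noteq> 0}"]) auto

definition Box :: "nat \<Rightarrow> LL set" where
  "Box a = {f. \<forall>k. (k \<in> {- 4 * int a .. 4 * int a} \<longrightarrow> f k \<in> {- 2 * int a .. 2 * int a})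
                  \<and> (k \<notin> {- 4 * int a .. 4 * int a} \<longrightarrow> f k = 0)} \<times> {- 2 * int a .. 2 * int a}"

lemma finite_Box: "finite (Box a)"
  unfolding Box_def by (intro finite_cartesian_product finite_set_of_finite_funs) auto

lemma phi_supp:
  assumes "phi a (f, n) \<noteq> 0"
  shows "\<bar>n\<bar> < 2 * int a" "\<And>k. \<bar>f k\<bar> < 2 * int a" "\<And>k. \<bar>k\<bar> > 4 * int a \<Longrightarrow> f k = 0"
proof -
  have t: "tent a n \<noteq> 0" and L: "Lam a f n \<noteq> 0" using assms by (auto simp: phi_def)
  show n: "\<bar>n\<bar> < 2 * int a" using t by (auto simp: tent_def)
  have out: "\<forall>k. k \<notin> Win a n \<longrightarrow> f k = 0" and P: "(\<Prod>k\<in>Win a n. tent a (f k)) \<noteq> 0"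
    using L by (auto simp: Lam_def split: if_splits)
  show "\<bar>f k\<bar> < 2 * int a" for k
  proof (cases "k \<in> Win a n")
    case True
    then have "tent a (f k) \<noteq> 0" using P by (auto simp: Win_def)
    then show ?thesis by (auto simp: tent_def)
  next
    case False then show ?thesis using out n by auto
  qed
  show "f k = 0" if "\<bar>k\<bar> > 4 * int a" for k
  proof -
    have "k \<notin> Win a n" using that n by (auto simp: Win_def)
    then show ?thesis using out by blast
  qed
qed

lemma phi_fsupp: "fsupp (phi a)"
proof -
  have "{z. phi a z \<noteq> 0} \<subseteq> Box a"
  proof
    fix z assume "z \<in> {z. phi a z \<noteq> 0}"
    moreover obtain f n where z: "z = (f, n)" by (cases z)
    ultimately have "phi a (f, n) \<noteq> 0" by simp
    note S = phi_supp[OF this]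
    show "z \<in> Box a" unfolding z Box_def
    proof (intro SigmaI CollectI allI conjI impI)
      fix k
      show "f k \<in> {- 2 * int a..2 * int a}" if "k \<in> {- 4 * int a..4 * int a}"
        using S(2)[of k] by (auto simp: abs_less_iff)
      show "f k = 0" if "k \<notin> {- 4 * int a..4 * int a}"
        using S(3)[of k] that by (auto simp: abs_less_iff)
    next
      show "n \<in> {- 2 * int a..2 * int a}" using S(1) by auto
    qed
  qed
  then show ?thesis unfolding fsupp_def using finite_Box by (rule finite_subset)
qed

lemma phi_Rch:
  assumes "phi a z \<noteq> 0"
  shows "Rch z (3 * (4 * a) + 1 + (2 * (4 * a) + 1) * (2 * a + 1))"
proof -
  obtain f n where z: "z = (f, n)" by (cases z)
  note S = phi_supp[OF assms[unfolded z]]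
  show ?thesis unfolding z
    by (rule Rch_bound) (use S in \<open>auto simp: less_imp_le\<close>)
qed

lemma phi_e_pos: "a \<ge> 1 \<Longrightarrow> phi a LL_e > 0"
  by (simp add: phi_def LL_e_def Lam_def tent_def prod_pos)



lemma powr_convex0:
  fixes p :: real assumes p: "p \<ge> 1"
  shows "convex_on {0..} (\<lambda>x::real. x powr p)"
proof (rule convex_onI)
  show "convex {0::real..}" by simp
  fix t x y :: real assume t: "0 < t" "t < 1" and xy: "x \<in> {0..}" "y \<in> {0..}"
  have tp: "s powr p \<le> s" if "0 \<le> s" "s \<le> 1" for s :: real
    using powr_mono'[of 1 p s] that p by simp
  show "((1 - t) *\<^sub>R x + t *\<^sub>R y) powr p \<le> (1 - t) * x powr p + t * y powr p"
  proof (cases "x = 0")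
    case True
    have "(t * y) powr p = t powr p * y powr p" by (simp add: powr_mult)
    also have "\<dots> \<le> t * y powr p" using tp[of t] t by (intro mult_right_mono) auto
    finally show ?thesis using True by simp
  next
    case x: False
    show ?thesis
    proof (cases "y = 0")
      case True
      have "((1 - t) * x) powr p = (1 - t) powr p * x powr p" by (simp add: powr_mult)
      also have "\<dots> \<le> (1 - t) * x powr p" using tp[of "1 - t"] t by (intro mult_right_mono) auto
      finally show ?thesis using True by simp
    next
      case False
      then have "x \<in> {0<..}" "y \<in> {0<..}" using x xy by auto
      from convex_onD[OF powr_convex[OF p], of t x y, OF _ _ this] t show ?thesis by simp
    qed
  qed
qed

lemma sum_powr_le:
  fixes p :: real and x :: "'i \<Rightarrow> real"
  assumes p: "p \<ge> 1" and I: "finite I" "I \<noteq> {}" and x: "\<And>i. i \<in> I \<Longrightarrow> x i \<ge> 0"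
  shows "(\<Sum>i\<in>I. x i) powr p \<le> real (card I) powr (p - 1) * (\<Sum>i\<in>I. x i powr p)"
proof -
  define k where "k = real (card I)"
  have k: "k > 0" using I by (simp add: k_def card_gt_0_iff)
  have "(\<Sum>i\<in>I. (1 / k) *\<^sub>R x i) powr p \<le> (\<Sum>i\<in>I. (1 / k) * x i powr p)"
    using I x k by (intro convex_on_sum[OF I powr_convex0[OF p]]) (auto simp: k_def)
  then have "((\<Sum>i\<in>I. x i) / k) powr p \<le> (\<Sum>i\<in>I. x i powr p) / k"
    by (simp add: sum_divide_distrib[symmetric] sum_distrib_left[symmetric] divide_inverse mult.commute)
  then have "(\<Sum>i\<in>I. x i) powr p / k powr p \<le> (\<Sum>i\<in>I. x i powr p) / k"
    by (simp add: powr_divide sum_nonneg x)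
  then have "(\<Sum>i\<in>I. x i) powr p \<le> k powr p * ((\<Sum>i\<in>I. x i powr p) / k)"
    using k by (simp add: field_simps)
  also have "k powr p * ((\<Sum>i\<in>I. x i powr p) / k) = k powr (p - 1) * (\<Sum>i\<in>I. x i powr p)"
    using k by (simp add: powr_diff)
  finally show ?thesis unfolding k_def .
qed

lemma infsum_fsum:
  fixes F :: "'j \<Rightarrow> 'a \<Rightarrow> real"
  assumes "finite J" "\<And>j. j \<in> J \<Longrightarrow> F j summable_on A"
  shows "(\<lambda>z. \<Sum>j\<in>J. F j z) summable_on A \<and> infsum (\<lambda>z. \<Sum>j\<in>J. F j z) A = (\<Sum>j\<in>J. infsum (F j) A)"
  using assms
proof (induction J rule: finite_induct)
  case empty then show ?case by simp
next
  case (insert j J)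
  then have IH: "(\<lambda>z. \<Sum>j\<in>J. F j z) summable_on A" "infsum (\<lambda>z. \<Sum>j\<in>J. F j z) A = (\<Sum>j\<in>J. infsum (F j) A)"
    and Fj: "F j summable_on A" by auto
  show ?case using insert(1,2) IH Fj
    by (simp add: summable_on_add infsum_add)
qed

abbreviation "X \<equiv> LL_carrier"

lemma infsum_transl:
  assumes "h \<in> X" shows "infsum (\<lambda>z. g (LL_mult h z)) X = infsum g X"
  using infsum_reindex_bij_betw[OF bij_left[OF assms], of g] .

lemma summable_transl:
  assumes "h \<in> X" shows "(\<lambda>z. g (LL_mult h z)) summable_on X \<longleftrightarrow> g summable_on X"
  using summable_on_reindex_bij_betw[OF bij_left[OF assms], of g] .

lemma fsupp_powr: "fsupp g \<Longrightarrow> p > 0 \<Longrightarrow> fsupp (\<lambda>z. \<bar>g z\<bar> powr p)"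
  unfolding fsupp_def by (rule finite_subset[rotated]) auto

lemma phip_fsupp: "fsupp (\<lambda>z. phi a z powr p)"
  using phi_fsupp[of a] unfolding fsupp_def by (rule finite_subset[rotated]) auto

lemma smoothing:
  fixes p c :: real and H :: "LL \<Rightarrow> real"
  assumes J: "finite J" and g: "\<And>j. j \<in> J \<Longrightarrow> g j \<in> X" and c: "c > 0"
    and H: "fsupp H"
    and pw: "\<And>z. H z \<le> (\<Sum>j\<in>J. phi a (LL_mult (g j) z) powr p) / c"
  shows "infsum H X \<le> real (card J) / c * infsum (\<lambda>z. phi a z powr p) X"
proof -
  let ?F = "\<lambda>j z. phi a (LL_mult (g j) z) powr p / c"
  have Fs: "?F j summable_on X" for j
    by (rule fsupp_summable) (use fsupp_transl[OF phip_fsupp[of a p], of "g j"] in \<open>auto simp: fsupp_def\<close>)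
  note S = infsum_fsum[OF J, of ?F X, OF Fs]
  have "infsum H X \<le> infsum (\<lambda>z. \<Sum>j\<in>J. ?F j z) X"
    using pw by (intro infsum_mono fsupp_summable[OF H] S[THEN conjunct1]) (simp add: sum_divide_distrib)
  also have "\<dots> = (\<Sum>j\<in>J. infsum (?F j) X)" using S by simp
  also have "\<dots> = (\<Sum>j\<in>J. infsum (\<lambda>z. phi a z powr p) X / c)"
  proof (intro sum.cong refl)
    fix j assume "j \<in> J"
    have "infsum (?F j) X = infsum (\<lambda>z. phi a (LL_mult (g j) z) powr p) X / c"
      using infsum_cmult_left'[of "\<lambda>z. phi a (LL_mult (g j) z) powr p" "inverse c" X]
      by (simp add: divide_inverse)
    also have "\<dots> = infsum (\<lambda>z. phi a z powr p) X / c"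
      using infsum_transl[OF g[OF \<open>j \<in> J\<close>], of "\<lambda>z. phi a z powr p"] by simp
    finally show "infsum (?F j) X = infsum (\<lambda>z. phi a z powr p) X / c" .
  qed
  also have "\<dots> = real (card J) / c * infsum (\<lambda>z. phi a z powr p) X" by simp
  finally show ?thesis .
qed

lemma gens_cases:
  "s \<in> LL_gens \<Longrightarrow> s = tgl 1 \<or> s = tgl (-1) \<or> s = shf 1 \<or> s = shf (-1)"
  by (auto simp: LL_gens_def tgl_def shf_def fun_eq_iff)

lemma gen_bound:
  fixes p :: real
  assumes a: "a \<ge> 1" and p: "p \<ge> 1" and s: "s \<in> LL_gens"
  shows "infsum (\<lambda>z. \<bar>phi a z - phi a (LL_mult s z)\<bar> powr p) X
     \<le> real (4 * a + 1) / real a powr (p + 1) * infsum (\<lambda>z. phi a z powr p) X"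
proof -
  have cJ: "card {- 2 * int a .. 2 * int a} = 4 * a + 1" by simp
  have c: "real a powr (p + 1) > 0" using a by simp
  have H: "fsupp (\<lambda>z. \<bar>phi a z - phi a (LL_mult s z)\<bar> powr p)"
  proof (rule fsupp_powr)
    show "fsupp (\<lambda>z. phi a z - phi a (LL_mult s z))"
      by (rule fsupp_dom[OF phi_fsupp fsupp_transl[OF phi_fsupp, of a s]]) auto
  qed (use p in auto)
  from gens_cases[OF s] show ?thesis
  proof (elim disjE)
    assume "s = tgl 1"
    then show ?thesis using smoothing[of "{- 2 * int a .. 2 * int a}" tgl, OF _ _ c H, where a=a and p=p] pointwise_tgl[OF a p, of 1]
      by (simp add: tgl_carrier cJ add.commute)
  next
    assume "s = tgl (-1)"
    then show ?thesis using smoothing[of "{- 2 * int a .. 2 * int a}" tgl, OF _ _ c H, where a=a and p=p] pointwise_tgl[OF a p, of "-1"]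
      by (simp add: tgl_carrier cJ add.commute)
  next
    assume "s = shf 1"
    then show ?thesis using smoothing[of "{- 2 * int a .. 2 * int a}" shf, OF _ _ c H, where a=a and p=p] pointwise_shf[OF a p, of 1]
      by (simp add: shf_carrier cJ add.commute)
  next
    assume "s = shf (-1)"
    then show ?thesis using smoothing[of "{- 2 * int a .. 2 * int a}" shf, OF _ _ c H, where a=a and p=p] pointwise_shf[OF a p, of "-1"]
      by (simp add: shf_carrier cJ add.commute)
  qed
qed



definition Phi :: "nat \<Rightarrow> real \<Rightarrow> real" where
  "Phi a p = infsum (\<lambda>z. phi a z powr p) X"

definition xi :: "nat \<Rightarrow> real \<Rightarrow> LL \<Rightarrow> LL \<Rightarrow> real" where
  "xi a p x y = phi a (LL_mult (LL_inv x) y) / Phi a p powr (1 / p)"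

lemma Phi_pos:
  assumes a: "a \<ge> 1" and p: "p \<ge> 1" shows "Phi a p > 0"
proof -
  have "infsum (\<lambda>z. phi a z powr p) {LL_e} \<le> infsum (\<lambda>z. phi a z powr p) X"
    by (intro infsum_mono_neutral fsupp_summable phip_fsupp) auto
  moreover have "infsum (\<lambda>z. phi a z powr p) {LL_e} > 0" using phi_e_pos[OF a] by simp
  ultimately show ?thesis unfolding Phi_def by linarith
qed

lemma xi_powr:
  assumes a: "a \<ge> 1" and p: "p \<ge> 1"
  shows "\<bar>xi a p x y\<bar> powr p = phi a (LL_mult (LL_inv x) y) powr p / Phi a p"
proof -
  have P: "Phi a p > 0" using Phi_pos[OF a p] .
  have "(Phi a p powr (1 / p)) powr p = Phi a p" using P p by (simp add: powr_powr)
  then show ?thesis unfolding xi_def using P by (simp add: powr_divide)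
qed

lemma xi_fsupp: "fsupp (xi a p x)"
proof -
  have "{y. xi a p x y \<noteq> 0} \<subseteq> {y. phi a (LL_mult (LL_inv x) y) \<noteq> 0}" by (auto simp: xi_def)
  then show ?thesis using fsupp_transl[OF phi_fsupp[of a], of "LL_inv x"] unfolding fsupp_def
    by (rule finite_subset)
qed

lemma diff_fsupp: "fsupp g \<Longrightarrow> fsupp h \<Longrightarrow> p > 0 \<Longrightarrow> fsupp (\<lambda>y. \<bar>g y - h y\<bar> powr p)"
  by (rule fsupp_powr[OF fsupp_dom[of g h]]) auto

lemma xi_sphere:
  assumes a: "a \<ge> 1" and p: "p \<ge> 1" and x: "x \<in> X"
  shows "xi a p x \<in> lp_sphere p X"
proof -
  have sm: "(\<lambda>y. \<bar>xi a p x y\<bar> powr p) summable_on X"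
    by (rule fsupp_summable, rule fsupp_powr[OF xi_fsupp]) (use p in auto)
  have "infsum (\<lambda>y. \<bar>xi a p x y\<bar> powr p) X = infsum (\<lambda>y. phi a (LL_mult (LL_inv x) y) powr p / Phi a p) X"
    by (simp add: xi_powr[OF a p])
  also have "\<dots> = infsum (\<lambda>y. phi a y powr p / Phi a p) X"
    by (rule infsum_transl[OF inv_carrier[OF x], of "\<lambda>y. phi a y powr p / Phi a p"])
  also have "\<dots> = Phi a p / Phi a p"
    using infsum_cmult_left'[of "\<lambda>y. phi a y powr p" "inverse (Phi a p)" X]
    by (simp add: divide_inverse Phi_def)
  also have "\<dots> = 1" using Phi_pos[OF a p] by simp
  finally show ?thesis using sm by (simp add: lp_sphere_def lp_space_def lp_norm_def)
qed

definition Ebd :: "nat \<Rightarrow> real \<Rightarrow> real" where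
  "Ebd a p = real (4 * a + 1) / real a powr (p + 1)"

lemma step_bound:
  assumes a: "a \<ge> 1" and p: "p \<ge> 1" and w: "w \<in> X" and s: "s \<in> LL_gens"
  shows "infsum (\<lambda>y. \<bar>xi a p w y - xi a p (LL_mult w s) y\<bar> powr p) X \<le> Ebd a p"
proof -
  have P: "Phi a p > 0" using Phi_pos[OF a p] .
  define G where "G z = \<bar>phi a z - phi a (LL_mult (LL_inv s) z)\<bar> powr p / Phi a p" for z
  have eq: "\<bar>xi a p w y - xi a p (LL_mult w s) y\<bar> powr p = G (LL_mult (LL_inv w) y)" for y
  proof -
    have "LL_mult (LL_inv (LL_mult w s)) y = LL_mult (LL_inv s) (LL_mult (LL_inv w) y)"
      by (simp add: LL_inv_mult LL_assoc)
    moreover have "(Phi a p powr (1 / p)) powr p = Phi a p" using P p by (simp add: powr_powr)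
    ultimately show ?thesis unfolding xi_def G_def using P
      by (simp add: powr_divide flip: diff_divide_distrib)
  qed
  have "infsum (\<lambda>y. \<bar>xi a p w y - xi a p (LL_mult w s) y\<bar> powr p) X = infsum G X"
    unfolding eq by (rule infsum_transl[OF inv_carrier[OF w]])
  also have "\<dots> = infsum (\<lambda>z. \<bar>phi a z - phi a (LL_mult (LL_inv s) z)\<bar> powr p) X / Phi a p"
    using infsum_cmult_left'[of "\<lambda>z. \<bar>phi a z - phi a (LL_mult (LL_inv s) z)\<bar> powr p" "inverse (Phi a p)" X]
    by (simp add: divide_inverse G_def[abs_def])
  also have "\<dots> \<le> Ebd a p * Phi a p / Phi a p"
    using gen_bound[OF a p gens_inv[OF s]] P unfolding Ebd_def Phi_def
    by (intro divide_right_mono) auto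
  also have "\<dots> = Ebd a p" using P by simp
  finally show ?thesis .
qed

lemma chain_bound:
  assumes a: "a \<ge> 1" and p: "p \<ge> 1" and x: "x \<in> X" and ws: "set ws \<subseteq> LL_gens" and d: "length ws \<ge> 1"
  shows "infsum (\<lambda>y. \<bar>xi a p x y - xi a p (foldl LL_mult x ws) y\<bar> powr p) X
           \<le> real (length ws) powr p * Ebd a p"
proof -
  define d where "d = length ws"
  define P where "P i = foldl LL_mult x (take i ws)" for i
  have P0: "P 0 = x" by (simp add: P_def)
  have Pd: "P d = foldl LL_mult x ws" by (simp add: P_def d_def)
  have PS: "P (Suc i) = LL_mult (P i) (ws ! i)" if "i < d" for i
    using that by (simp add: P_def d_def take_Suc_conv_app_nth)
  have PX: "P i \<in> X" for i
    unfolding P_def using x ws by (intro foldl_carrier) (auto dest: in_set_takeD)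
  have wsi: "ws ! i \<in> LL_gens" if "i < d" for i using ws that d_def by auto
  define D where "D i y = xi a p (P i) y - xi a p (P (Suc i)) y" for i y
  have tel: "xi a p x y - xi a p (foldl LL_mult x ws) y = (\<Sum>i<d. D i y)" for y
    unfolding D_def sum_lessThan_telescope'[of "\<lambda>i. xi a p (P i) y"] P0 Pd ..
  have pp: "p > 0" using p by simp
  have Dsum: "(\<lambda>y. \<bar>D i y\<bar> powr p) summable_on X" for i
    unfolding D_def by (intro fsupp_summable diff_fsupp xi_fsupp pp)
  have dpos: "d \<ge> 1" using d d_def by simp
  have pw: "\<bar>xi a p x y - xi a p (foldl LL_mult x ws) y\<bar> powr p
              \<le> real d powr (p - 1) * (\<Sum>i<d. \<bar>D i y\<bar> powr p)" for y
  proof -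
    have "\<bar>xi a p x y - xi a p (foldl LL_mult x ws) y\<bar> powr p \<le> (\<Sum>i<d. \<bar>D i y\<bar>) powr p"
      unfolding tel using pp by (intro powr_mono2) (simp_all add: sum_abs)
    also have "\<dots> \<le> real (card {..<d}) powr (p - 1) * (\<Sum>i<d. \<bar>D i y\<bar> powr p)"
      using dpos by (intro sum_powr_le p) (auto simp: lessThan_empty_iff)
    finally show ?thesis by simp
  qed
  note S = infsum_fsum[of "{..<d}" "\<lambda>i y. \<bar>D i y\<bar> powr p" X, OF _ Dsum]
  have "infsum (\<lambda>y. \<bar>xi a p x y - xi a p (foldl LL_mult x ws) y\<bar> powr p) X
     \<le> infsum (\<lambda>y. real d powr (p - 1) * (\<Sum>i<d. \<bar>D i y\<bar> powr p)) X"
  proof (rule infsum_mono)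
    show "(\<lambda>y. \<bar>xi a p x y - xi a p (foldl LL_mult x ws) y\<bar> powr p) summable_on X"
      by (intro fsupp_summable diff_fsupp xi_fsupp pp)
    show "(\<lambda>y. real d powr (p - 1) * (\<Sum>i<d. \<bar>D i y\<bar> powr p)) summable_on X"
      using S by (intro summable_on_cmult_right) simp
  qed (rule pw)
  also have "\<dots> = real d powr (p - 1) * (\<Sum>i<d. infsum (\<lambda>y. \<bar>D i y\<bar> powr p) X)"
    using S by (simp add: infsum_cmult_right')
  also have "\<dots> \<le> real d powr (p - 1) * (\<Sum>i<d. Ebd a p)"
  proof (intro mult_left_mono sum_mono)
    fix i assume "i \<in> {..<d}"
    then have i: "i < d" by simp
    have g: "ws ! i \<in> LL_gens" by (rule wsi[OF i])
    have "infsum (\<lambda>y. \<bar>xi a p (P i) y - xi a p (LL_mult (P i) (ws ! i)) y\<bar> powr p) X \<le> Ebd a p"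
      by (rule step_bound[OF a p PX g])
    then show "infsum (\<lambda>y. \<bar>D i y\<bar> powr p) X \<le> Ebd a p"
      unfolding D_def PS[OF i] .
  qed auto
  also have "\<dots> = real d powr (p - 1) * real d * Ebd a p" by simp
  also have "real d powr (p - 1) * real d = real d powr p"
  proof -
    have "real d powr p = real d powr ((p - 1) + 1)" by simp
    also have "\<dots> = real d powr (p - 1) * real d powr 1" by (rule powr_add)
    also have "\<dots> = real d powr (p - 1) * real d" using dpos by simp
    finally show ?thesis by simp
  qed
  finally show ?thesis unfolding d_def .
qed



abbreviation "dst \<equiv> (\<lambda>x y. real (LL_dist x y))"

lemma e_ne_tgl: "LL_e \<noteq> tgl 1"
  by (auto simp: LL_e_def tgl_def fun_eq_iff delta0_def)

lemma pairs_ne: "{(x, y). x \<in> X \<and> y \<in> X \<and> x \<noteq> y} \<noteq> {}"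
  using e_ne_tgl tgl_carrier e_carrier by blast

lemma eps_our:
  assumes a: "a \<ge> 1" and p: "p \<ge> 1"
  shows "eps_xi p X dst (xi a p) \<le> Ebd a p powr (1 / p)"
  unfolding eps_xi_def
proof (rule cSUP_least[OF pairs_ne])
  fix z assume "z \<in> {(x, y). x \<in> X \<and> y \<in> X \<and> x \<noteq> y}"
  then obtain x y where z: "z = (x, y)" and x: "x \<in> X" and y: "y \<in> X" and xy: "x \<noteq> y" by auto
  obtain ws where ws: "length ws = LL_dist x y" "set ws \<subseteq> LL_gens" "foldl LL_mult x ws = y"
    using dist_witness[OF x y] by blast
  define d where "d = length ws"
  have d1: "d \<ge> 1"
  proof (rule ccontr)
    assume "\<not> d \<ge> 1" then have "ws = []" using d_def by (cases ws) auto
    then show False using ws xy by simp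
  qed
  have Ep: "Ebd a p \<ge> 0" by (simp add: Ebd_def)
  have I: "infsum (\<lambda>t. \<bar>xi a p x t - xi a p y t\<bar> powr p) X \<le> real d powr p * Ebd a p"
    using chain_bound[OF a p x ws(2)] d1 ws(3) by (simp add: d_def)
  have "lp_norm p X (\<lambda>t. xi a p x t - xi a p y t) \<le> (real d powr p * Ebd a p) powr (1 / p)"
    unfolding lp_norm_def using p I by (intro powr_mono2) (auto intro: infsum_nonneg)
  also have "\<dots> = real d * Ebd a p powr (1 / p)"
    using p by (simp add: powr_mult powr_powr)
  finally have N: "lp_norm p X (\<lambda>t. xi a p x t - xi a p y t) \<le> real d * Ebd a p powr (1 / p)" .
  have "lp_norm p X (\<lambda>t. xi a p x t - xi a p y t) / real d \<le> Ebd a p powr (1 / p)"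
    using N d1 by (simp add: divide_le_eq mult.commute)
  then show "(\<lambda>(x, y). lp_norm p X (\<lambda>z. xi a p x z - xi a p y z) / dst x y) z \<le> Ebd a p powr (1 / p)"
    using ws(1) by (simp add: z d_def)
qed

lemma sphere_sum:
  assumes "g \<in> lp_sphere p X" "p \<ge> 1"
  shows "(\<lambda>y. \<bar>g y\<bar> powr p) summable_on X" "infsum (\<lambda>y. \<bar>g y\<bar> powr p) X = 1"
proof -
  show "(\<lambda>y. \<bar>g y\<bar> powr p) summable_on X" using assms by (simp add: lp_sphere_def lp_space_def)
  have n: "(infsum (\<lambda>y. \<bar>g y\<bar> powr p) X) powr (1 / p) = 1"
    using assms by (simp add: lp_sphere_def lp_norm_def)
  have nn: "infsum (\<lambda>y. \<bar>g y\<bar> powr p) X \<ge> 0" by (intro infsum_nonneg) auto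
  have "infsum (\<lambda>y. \<bar>g y\<bar> powr p) X = ((infsum (\<lambda>y. \<bar>g y\<bar> powr p) X) powr (1 / p)) powr p"
    using nn assms(2) by (simp add: powr_powr)
  then show "infsum (\<lambda>y. \<bar>g y\<bar> powr p) X = 1" using n by simp
qed

lemma two_powr:
  fixes u v p :: real assumes p: "p \<ge> 1"
  shows "\<bar>u - v\<bar> powr p \<le> 2 powr (p - 1) * (\<bar>u\<bar> powr p + \<bar>v\<bar> powr p)"
proof -
  have "\<bar>u - v\<bar> powr p \<le> (\<Sum>i\<in>{0::nat, 1}. (if i = 0 then \<bar>u\<bar> else \<bar>v\<bar>)) powr p"
    using p by (intro powr_mono2) auto
  also have "\<dots> \<le> real (card {0::nat, 1}) powr (p - 1) * (\<Sum>i\<in>{0::nat, 1}. (if i = 0 then \<bar>u\<bar> else \<bar>v\<bar>) powr p)"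
    by (intro sum_powr_le p) auto
  finally show ?thesis by simp
qed

lemma diff_le2:
  assumes g: "g \<in> lp_sphere p X" and h: "h \<in> lp_sphere p X" and p: "p \<ge> 1"
  shows "lp_norm p X (\<lambda>z. g z - h z) \<le> 2"
proof -
  note G = sphere_sum[OF g p] and H = sphere_sum[OF h p]
  have R: "(\<lambda>y. 2 powr (p - 1) * (\<bar>g y\<bar> powr p + \<bar>h y\<bar> powr p)) summable_on X"
    by (intro summable_on_cmult_right summable_on_add G(1) H(1))
  have L: "(\<lambda>y. \<bar>g y - h y\<bar> powr p) summable_on X"
    by (rule summable_on_comparison_test[OF R]) (auto intro: two_powr p)
  have "infsum (\<lambda>y. \<bar>g y - h y\<bar> powr p) X \<le> infsum (\<lambda>y. 2 powr (p - 1) * (\<bar>g y\<bar> powr p + \<bar>h y\<bar> powr p)) X"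
    by (intro infsum_mono L R two_powr p)
  also have "\<dots> = 2 powr (p - 1) * 2"
    by (simp add: infsum_cmult_right' infsum_add G H)
  also have "\<dots> = 2 powr p"
  proof -
    have "(2::real) powr p = 2 powr ((p - 1) + 1)" by simp
    also have "\<dots> = 2 powr (p - 1) * 2 powr 1" by (rule powr_add)
    finally show ?thesis by simp
  qed
  finally have I: "infsum (\<lambda>y. \<bar>g y - h y\<bar> powr p) X \<le> 2 powr p" .
  have "lp_norm p X (\<lambda>z. g z - h z) \<le> (2 powr p) powr (1 / p)"
    unfolding lp_norm_def using p I by (intro powr_mono2) (auto intro: infsum_nonneg)
  also have "\<dots> = 2" using p by (simp add: powr_powr)
  finally show ?thesis .
qed

lemma eps_nonneg:
  assumes p: "p \<ge> 1" and \<xi>: "\<forall>x\<in>X. \<xi> x \<in> lp_sphere p X"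
  shows "eps_xi p X dst \<xi> \<ge> 0"
  unfolding eps_xi_def
proof (rule cSUP_upper2)
  let ?f = "\<lambda>(x, y). lp_norm p X (\<lambda>z. \<xi> x z - \<xi> y z) / dst x y"
  show "bdd_above (?f ` {(x, y). x \<in> X \<and> y \<in> X \<and> x \<noteq> y})"
  proof (rule bdd_aboveI2)
    fix z assume "z \<in> {(x, y). x \<in> X \<and> y \<in> X \<and> x \<noteq> y}"
    then obtain x y where z: "z = (x, y)" and x: "x \<in> X" and y: "y \<in> X" by auto
    have N: "lp_norm p X (\<lambda>t. \<xi> x t - \<xi> y t) \<le> 2" using diff_le2 \<xi> x y p by blast
    have N0: "lp_norm p X (\<lambda>t. \<xi> x t - \<xi> y t) \<ge> 0" by (simp add: lp_norm_def)
    have "lp_norm p X (\<lambda>t. \<xi> x t - \<xi> y t) / dst x y \<le> 2"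
    proof (cases "LL_dist x y = 0")
      case True then show ?thesis by simp
    next
      case False
      then have "dst x y \<ge> 1" by simp
      then have d1: "dst x y \<ge> 1" .
      have "lp_norm p X (\<lambda>t. \<xi> x t - \<xi> y t) * 1 \<le> lp_norm p X (\<lambda>t. \<xi> x t - \<xi> y t) * dst x y"
        by (rule mult_left_mono[OF d1 N0])
      then have "lp_norm p X (\<lambda>t. \<xi> x t - \<xi> y t) / dst x y \<le> lp_norm p X (\<lambda>t. \<xi> x t - \<xi> y t)"
        using d1 by (simp add: divide_le_eq)
      then show ?thesis using N by linarith
    qed
    then show "?f z \<le> 2" by (simp add: z)
  qed
  show "(LL_e, tgl 1) \<in> {(x, y). x \<in> X \<and> y \<in> X \<and> x \<noteq> y}"
    using e_ne_tgl tgl_carrier by simp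
  show "0 \<le> ?f (LL_e, tgl 1)" by (simp add: lp_norm_def)
qed

definition Bnd :: "nat \<Rightarrow> nat" where "Bnd a = 3 * (4 * a) + 1 + (2 * (4 * a) + 1) * (2 * a + 1)"

lemma profile_le:
  assumes a: "a \<ge> 1" and p: "p \<ge> 1" and S: "real (Bnd a) \<le> S"
  shows "profile p X dst S \<le> Ebd a p powr (1 / p)"
  unfolding profile_def
proof (rule cInf_lower2)
  have sph: "\<forall>x\<in>X. xi a p x \<in> lp_sphere p X" using xi_sphere[OF a p] by blast
  have rad: "supp_radius_le X dst (xi a p) S"
    unfolding supp_radius_le_def
  proof (intro ballI impI)
    fix x y assume x: "x \<in> X" and y: "y \<in> X" and ne: "xi a p x y \<noteq> 0"
    then have "phi a (LL_mult (LL_inv x) y) \<noteq> 0" by (auto simp: xi_def)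
    from phi_Rch[OF this] have "LL_dist x y \<le> Bnd a" unfolding Bnd_def by (rule dist_le_Rch)
    then show "dst x y \<le> S" using S by linarith
  qed
  show "eps_xi p X dst (xi a p) \<in> {eps_xi p X dst \<xi> |\<xi>. (\<forall>x\<in>X. \<xi> x \<in> lp_sphere p X) \<and> supp_radius_le X dst \<xi> S}"
    using sph rad by blast
  show "eps_xi p X dst (xi a p) \<le> Ebd a p powr (1 / p)" by (rule eps_our[OF a p])
  show "bdd_below {eps_xi p X dst \<xi> |\<xi>. (\<forall>x\<in>X. \<xi> x \<in> lp_sphere p X) \<and> supp_radius_le X dst \<xi> S}"
  proof (rule bdd_belowI)
    fix v assume "v \<in> {eps_xi p X dst \<xi> |\<xi>. (\<forall>x\<in>X. \<xi> x \<in> lp_sphere p X) \<and> supp_radius_le X dst \<xi> S}"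
    then obtain \<xi> where v: "v = eps_xi p X dst \<xi>" and "\<forall>x\<in>X. \<xi> x \<in> lp_sphere p X" by blast
    then show "0 \<le> v" using eps_nonneg[OF p] by blast
  qed
qed



lemma Ebd_le:
  assumes a: "a \<ge> 1" and p: "p \<ge> 1"
  shows "Ebd a p powr (1 / p) \<le> 5 / real a"
proof -
  have ap: "real a > 0" using a by simp
  have "Ebd a p = real (4 * a + 1) / (real a * real a powr p)"
    unfolding Ebd_def using ap by (simp add: powr_add mult.commute)
  also have "\<dots> \<le> (5 * real a) / (real a * real a powr p)"
    using a ap by (intro divide_right_mono) auto
  also have "\<dots> = 5 / real a powr p" using ap by simp
  finally have E: "Ebd a p \<le> 5 / real a powr p" .
  have "Ebd a p powr (1 / p) \<le> (5 / real a powr p) powr (1 / p)"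
    using E p by (intro powr_mono2) (auto simp: Ebd_def)
  also have "\<dots> = 5 powr (1 / p) / real a"
    using ap p by (simp add: powr_divide powr_powr)
  also have "\<dots> \<le> 5 / real a"
  proof -
    have "(5::real) powr (1 / p) \<le> 5 powr 1" using p by (intro powr_mono) auto
    then show ?thesis using ap by (simp add: divide_right_mono)
  qed
  finally show ?thesis .
qed

lemma final_bound:
  fixes p S :: real
  assumes p: "p \<ge> 1" and S: "S \<ge> 1000"
  shows "1 / 64 * profile p X dst S \<le> ln S / S powr (1 / 3)"
proof -
  define s where "s = sqrt (S / 40)"
  have s5: "s \<ge> 5" unfolding s_def using S by (simp add: real_le_rsqrt)
  have s2: "s * s = S / 40" unfolding s_def using S by simp
  define a where "a = nat \<lfloor>s\<rfloor>"
  have as: "real a \<le> s" "real a \<ge> s - 1" unfolding a_def using s5 by linarith+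
  have a1: "a \<ge> 1" using as s5 by linarith
  have ap: "real a > 0" using a1 by simp
  have B: "real (Bnd a) \<le> S"
  proof -
    have "real (Bnd a) = 16 * real a * real a + 22 * real a + 2" unfolding Bnd_def by (simp add: algebra_simps)
    also have "\<dots> \<le> 40 * (real a * real a)"
    proof -
      have r1: "real a \<ge> 1" using a1 by simp
      have "1 * real a \<le> real a * real a" by (rule mult_right_mono[OF r1]) simp
      then show ?thesis using r1 by linarith
    qed
    also have "\<dots> \<le> 40 * (s * s)" using as ap by (intro mult_left_mono mult_mono) auto
    finally show ?thesis using s2 by simp
  qed
  have P: "profile p X dst S \<le> 5 / real a"
    using profile_le[OF a1 p B] Ebd_le[OF a1 p] by linarith
  have "5 * s \<le> 10 * real a" using as s5 by linarith
  then have "5 / real a \<le> 10 / s" using s5 ap by (simp add: divide_simps)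
  also have "10 / s = 10 * sqrt 40 / sqrt S" unfolding s_def by (simp add: real_sqrt_divide)
  also have "\<dots> \<le> 64 / sqrt S"
  proof -
    have "sqrt 40 \<le> (32 / 5::real)" by (rule real_le_lsqrt) (simp_all add: power2_eq_square)
    then show ?thesis using S by (intro divide_right_mono) auto
  qed
  finally have "profile p X dst S \<le> 64 / sqrt S" using P by linarith
  then have P2: "1 / 64 * profile p X dst S \<le> 1 / sqrt S" by simp
  have Sp: "S powr (1 / 3) \<le> sqrt S"
  proof -
    have "S powr (1 / 3) \<le> S powr (1 / 2)" using S by (intro powr_mono) auto
    moreover have "S powr (1 / 2) = sqrt S" using S by (intro powr_half_sqrt) auto
    ultimately show ?thesis by linarith
  qed
  have Sp0: "S powr (1 / 3) > 0" using S by simp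
  have "1 / sqrt S \<le> 1 / S powr (1 / 3)"
  proof (rule divide_left_mono)
    show "0 < sqrt S * S powr (1 / 3)" using Sp0 S by (intro mult_pos_pos) auto
  qed (use Sp in auto)
  also have "\<dots> \<le> ln S / S powr (1 / 3)"
  proof -
    have "exp 1 \<le> S" using exp_le S by linarith
    then have "ln (exp 1) \<le> ln S" using S by (subst ln_le_cancel_iff) auto
    then have "1 \<le> ln S" by simp
    then show ?thesis using Sp0 by (intro divide_right_mono) auto
  qed
  finally show ?thesis using P2 by linarith
qed

theorem corollary4p2p7:
  fixes p :: real
  assumes "1 \<le> p"
  shows "preceq (profile p LL_carrier (\<lambda>x y. real (LL_dist x y))) (\<lambda>S. ln S / S powr (1/3))"
  unfolding preceq_def
proof (intro exI conjI)
  show "(1 / 64 :: real) > 0" "(1::real) > 0" by auto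
  show "\<forall>\<^sub>F t in at_top. 1 / 64 * profile p LL_carrier (\<lambda>x y. real (LL_dist x y)) (1 * t) \<le> ln t / t powr (1 / 3)"
    unfolding eventually_at_top_linorder
    using final_bound[OF assms] by (intro exI[of _ 1000]) auto
qed

end
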